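(* Consider the $2\times 1$ merge network with parameters $c>0$, $k>1$, $\eta\in(0,\tfrac12)$ and constant downstream queue length $Q\ge 0$: upstream queues $1,2$ have capacities $c_1=c$, $c_2=kc$ and inflows $f_1=\eta c$, $f_2=k\eta c$; the downstream queue has capacity $c_0=(k+1)c$. For weights $\gamma_0,\gamma_1,\gamma_2>0$ and an ordered pair $(u,s)\in\{(1,2),(2,1)\}$ (unsaturated queue $u$, saturated queue $s$) define $$q_{s,act}=\frac{\gamma_0}{\gamma_s}\Big(1-\frac{c_u}{c_s}\Big)Q+\frac{\gamma_u c_u}{\gamma_s c_s}f_u,\qquad \bar q_s=q_{s,act}+f_s-\tfrac12 c_s .$$ Let $\bar q_{s,classical}$ denote $\bar q_s$ for the classical weights $\gamma_0=\gamma_1=\gamma_2=1$, and $\bar q_{s,proposed}$ denote $\bar q_s$ for the proposed weights $\gamma_1=1/c_1$, $\gamma_2=1/c_2$, $\gamma_0=1/c_0$. Then, in regime R1, as $k\to\infty$: (i) for $(u,s)=(1,2)$ (with $Q=Q(k)$ satisfying $Q\ge \frac{k^2-\eta}{k-1}c$ and $Q\ge \frac{k-\eta}{k-1}(k+1)c$, the conditions under which this state exists for both weightings), $\bar q_{s,classical}/\bar q_{s,proposed}\to 1$; (ii) for $(u,s)=(2,1)$ (with $Q$, $c$, $\eta$ fixed), $\bar q_{s,classical}/\bar q_{s,proposed}\sim k$, i.e. $\bar q_{s,classical}/(k\,\bar q_{s,proposed})\to 1$.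
   Context: Model: discrete time $t=0,1,2,\dots$; two upstream queues $q_1(t),q_2(t)\ge 0$ merge into one downstream queue whose length is held constant at $Q$. The priority of upstream queue $i$ is $p_i(t)=(\gamma_i q_i(t)-\gamma_0 Q)c_i$. At each time step exactly one upstream queue is activated, one with maximal priority; the activated queue evolves as $q_i(t+1)=q_i(t)-\min(q_i(t),c_i)+f_i$, the other as $q_j(t+1)=q_j(t)+f_j$. Regime R1 means exactly one upstream queue (denoted $u$) is in the unsaturated regime (its outflow $\min(q_u,c_u)$ is below capacity) while the other (denoted $s$) is saturated (its outflow when activated equals $c_s$). The quantity $\bar q_s$ is the paper's approximation of the average steady-state length of the saturated queue, which measures time spent in the network. The weights $\gamma\equiv 1$ give the classical backpressure algorithm; the weights $\gamma=1/\text{capacity}$ give the proposed re-scaled algorithm. *)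

theory Defs
  imports Complex_Main
begin

text \<open>2x1 merge network: index 0 = downstream queue, 1 and 2 = upstream queues.
  Capacities c_0 = (k+1) c, c_1 = c, c_2 = k c.\<close>
definition cap :: "real \<Rightarrow> real \<Rightarrow> nat \<Rightarrow> real" where
  "cap c k i = (if i = 0 then (k + 1) * c else if i = 1 then c else k * c)"

text \<open>Inflows f_1 = eta c, f_2 = k eta c (only used for i = 1, 2).\<close>
definition inflow :: "real \<Rightarrow> real \<Rightarrow> real \<Rightarrow> nat \<Rightarrow> real" where
  "inflow c k \<eta> i = (if i = 1 then \<eta> * c else k * \<eta> * c)"

definition classical_w :: "nat \<Rightarrow> real" where
  "classical_w i = 1"

definition proposed_w :: "real \<Rightarrow> real \<Rightarrow> nat \<Rightarrow> real" where
  "proposed_w c k i = 1 / cap c k i"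

definition q_act :: "(nat \<Rightarrow> real) \<Rightarrow> real \<Rightarrow> real \<Rightarrow> real \<Rightarrow> real \<Rightarrow> nat \<Rightarrow> nat \<Rightarrow> real" where
  "q_act \<gamma> c k \<eta> Q u s =
     \<gamma> 0 / \<gamma> s * (1 - cap c k u / cap c k s) * Q
     + \<gamma> u * cap c k u / (\<gamma> s * cap c k s) * inflow c k \<eta> u"

definition q_bar :: "(nat \<Rightarrow> real) \<Rightarrow> real \<Rightarrow> real \<Rightarrow> real \<Rightarrow> real \<Rightarrow> nat \<Rightarrow> nat \<Rightarrow> real" where
  "q_bar \<gamma> c k \<eta> Q u s = q_act \<gamma> c k \<eta> Q u s + inflow c k \<eta> s - cap c k s / 2"

end

theory Submission
  imports Defs
begin

lemma qb_c12: "k > 1 \<Longrightarrow> c > 0 \<Longrightarrow> q_bar classical_w c k \<eta> Q 1 2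
   = (1 - 1/k)*Q + \<eta>*c/k + k*\<eta>*c - k*c/2"
  by (simp add: q_bar_def q_act_def classical_w_def cap_def inflow_def field_simps)

lemma qb_p12: "k > 1 \<Longrightarrow> c > 0 \<Longrightarrow> q_bar (proposed_w c k) c k \<eta> Q 1 2
   = (k-1)/(k+1)*Q + \<eta>*c + k*\<eta>*c - k*c/2"
proof -
  assume h: "k > 1" "c > 0"
  have "c*k + c*(k*k) > 0" using h by (simp add: add_pos_pos)
  then show ?thesis using h by (simp add: q_bar_def q_act_def proposed_w_def cap_def inflow_def field_simps)
qed

lemma qb_c21: "k > 1 \<Longrightarrow> c > 0 \<Longrightarrow> q_bar classical_w c k \<eta> Q 2 1
   = (1-k)*Q + k^2*\<eta>*c + \<eta>*c - c/2"
  by (simp add: q_bar_def q_act_def classical_w_def cap_def inflow_def field_simps power2_eq_square)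

lemma qb_p21: "k > 1 \<Longrightarrow> c > 0 \<Longrightarrow> q_bar (proposed_w c k) c k \<eta> Q 2 1
   = (1-k)/(k+1)*Q + k*\<eta>*c + \<eta>*c - c/2"
  using mult_pos_pos[of c "1+k"]
  by (simp add: q_bar_def q_act_def proposed_w_def cap_def inflow_def field_simps)

lemma bound1:
  fixes c \<eta> Q k :: real
  assumes c: "c > 0" and e: "0 < \<eta>" "\<eta> < 1/2" and k: "k > 1"
    and Qk: "Q \<ge> (k - \<eta>) / (k - 1) * (k + 1) * c"
  defines "A \<equiv> (1 - 1/k)*Q + \<eta>*c/k + k*\<eta>*c - k*c/2"
    and "B \<equiv> (k-1)/(k+1)*Q + \<eta>*c + k*\<eta>*c - k*c/2"
    and "a \<equiv> 1/2 + \<eta>"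
  shows "\<bar>A/B - 1\<bar> \<le> (1 + 1/(2*a) + \<eta>/a) / k"
proof -
  define x where "x = (k-1)/(k+1)*Q"
  have a: "a > 0" using e by (simp add: a_def)
  have kp: "k - 1 > 0" "k + 1 > 0" using k by auto
  have "x \<ge> (k-1)/(k+1) * ((k - \<eta>) / (k - 1) * (k + 1) * c)"
    unfolding x_def using Qk kp by (intro mult_left_mono) auto
  also have "(k-1)/(k+1) * ((k - \<eta>) / (k - 1) * (k + 1) * c) = (k - \<eta>)*c"
  proof -
    have "k*k - 1 > 0" using mult_strict_mono[of 1 k 1 k] k by simp
    then show ?thesis using kp by (simp add: field_simps)
  qed
  finally have x1: "x \<ge> (k - \<eta>)*c" .
  have B_eq: "B = x + \<eta>*c + k*\<eta>*c - k*c/2" unfolding B_def x_def by simp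
  have Bge: "B \<ge> k*c*a" using x1 unfolding B_eq a_def by (simp add: algebra_simps)
  have kca: "k*c*a > 0" using k c a by simp
  have Bpos: "B > 0" using Bge kca by linarith
  have AB: "A - B = x/k - \<eta>*c*(k-1)/k"
  proof -
    have "k + k*k > 0" "k*k + k*(k*k) > 0" using k by (simp_all add: add_pos_pos)
    then show ?thesis unfolding A_def B_def x_def using kp k by (simp add: field_simps)
  qed
  have "(k - \<eta>)*c \<ge> 0" using e k c by simp
  then have x0: "x \<ge> 0" using x1 by linarith
  have xB: "x \<le> B*(1 + 1/(2*a))"
  proof -
    have "x \<le> B + k*c/2" using B_eq e c k by (simp add: algebra_simps)
    moreover have "k*c/2 \<le> B/(2*a)" using Bge a by (simp add: field_simps)
    ultimately show ?thesis by (simp add: algebra_simps)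
  qed
  have "\<bar>A - B\<bar> \<le> x/k + \<eta>*c"
  proof -
    have "\<eta>*c*(k-1)/k \<le> \<eta>*c" using e c k by (simp add: field_simps)
    moreover have "\<eta>*c*(k-1)/k \<ge> 0" using e c k by simp
    moreover have "x/k \<ge> 0" using x0 k by simp
    ultimately show ?thesis unfolding AB by linarith
  qed
  also have "x/k + \<eta>*c \<le> B*(1 + 1/(2*a))/k + \<eta>*(B/(k*a))"
  proof -
    have h1: "x/k \<le> B*(1 + 1/(2*a))/k" using xB k by (simp add: divide_right_mono)
    have h2: "c \<le> B/(k*a)" using Bge k a by (simp add: pos_le_divide_eq mult.commute mult.left_commute)
    have h3: "\<eta>*c \<le> \<eta>*(B/(k*a))" using mult_left_mono[OF h2, of \<eta>] e(1) by simp
    show ?thesis using h1 h3 by linarith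
  qed
  also have "\<dots> = B * ((1 + 1/(2*a) + \<eta>/a) / k)"
    using k a by (simp add: field_simps)
  finally have "\<bar>A - B\<bar> \<le> B * ((1 + 1/(2*a) + \<eta>/a) / k)" .
  moreover have "\<bar>A/B - 1\<bar> = \<bar>A - B\<bar> / B" using Bpos by (simp add: field_simps)
  ultimately show ?thesis using Bpos by (simp add: divide_le_eq mult.commute)
qed

lemma part2:
  fixes c \<eta> Q0 :: real
  assumes c: "c > 0" and e: "0 < \<eta>"
  shows "((\<lambda>k. q_bar classical_w c k \<eta> Q0 2 1 / (k * q_bar (proposed_w c k) c k \<eta> Q0 2 1))
            \<longlongrightarrow> 1) at_top"
proof -
  define N where "N k = Q0*(inverse k*inverse k) - Q0*inverse k + \<eta>*c + (\<eta>*c - c/2)*(inverse k*inverse k)" for k :: real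
  define D where "D k = Q0*(inverse k*inverse (1+k)) - Q0*inverse (1+k) + \<eta>*c + (\<eta>*c - c/2)*inverse k" for k :: real
  have ik: "((\<lambda>k::real. inverse k) \<longlongrightarrow> 0) at_top"
    by (rule tendsto_inverse_0_at_top[OF filterlim_ident])
  have jk: "((\<lambda>k::real. inverse (1+k)) \<longlongrightarrow> 0) at_top"
    by (rule tendsto_inverse_0_at_top[OF filterlim_tendsto_add_at_top[OF tendsto_const filterlim_ident]])
  have "((\<lambda>k. N k / D k) \<longlongrightarrow> (Q0*(0*0) - Q0*0 + \<eta>*c + (\<eta>*c - c/2)*(0*0)) /
        (Q0*(0*0) - Q0*0 + \<eta>*c + (\<eta>*c - c/2)*0)) at_top"
    unfolding N_def D_def
    by (intro tendsto_intros ik jk) (use c e in simp)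
  then have lim: "((\<lambda>k. N k / D k) \<longlongrightarrow> 1) at_top" using c e by simp
  have ev: "eventually (\<lambda>k. N k / D k = q_bar classical_w c k \<eta> Q0 2 1 / (k * q_bar (proposed_w c k) c k \<eta> Q0 2 1)) at_top"
    using eventually_gt_at_top[of 1]
  proof eventually_elim
    case (elim k)
    have k0: "k > 0" "1 + k > 0" "k + k*k > 0" using elim by (auto simp: add_pos_pos)
    have Nk: "N k = q_bar classical_w c k \<eta> Q0 2 1 / (k*k)"
      unfolding qb_c21[OF elim c] N_def using k0
      by (simp add: field_simps power2_eq_square)
    have aux: "(1-k)/(k+1)*Q0/k = Q0*(inverse k * inverse(1+k)) - Q0*inverse(1+k)"
    proof -
      have "Q0*(inverse k * inverse(1+k)) - Q0*inverse(1+k) = Q0*(1-k)*(inverse k * inverse (1+k))"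
        using k0 by (simp add: algebra_simps)
      also have "\<dots> = (1-k)/(k+1)*Q0/k" by (simp add: divide_inverse algebra_simps)
      finally show ?thesis by simp
    qed
    have Dk: "D k = q_bar (proposed_w c k) c k \<eta> Q0 2 1 / k"
      unfolding qb_p21[OF elim c] D_def using k0 aux
      by (simp add: diff_divide_distrib add_divide_distrib inverse_eq_divide)
    show ?case unfolding Nk Dk using k0 by (simp add: field_simps)
  qed
  show ?thesis using tendsto_cong[OF ev] lim by simp
qed

lemma part1:
  fixes c \<eta> :: real and Q :: "real \<Rightarrow> real"
  assumes c: "c > 0" and e: "0 < \<eta>" "\<eta> < 1/2"
    and QQ: "\<forall>k>1. Q k \<ge> (k - \<eta>) / (k - 1) * (k + 1) * c"
  shows "((\<lambda>k. q_bar classical_w c k \<eta> (Q k) 1 2 / q_bar (proposed_w c k) c k \<eta> (Q k) 1 2)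
            \<longlongrightarrow> 1) at_top"
proof -
  define a where "a = 1/2 + \<eta>"
  define G where "G = 1 + 1/(2*a) + \<eta>/a"
  define r where "r k = q_bar classical_w c k \<eta> (Q k) 1 2 / q_bar (proposed_w c k) c k \<eta> (Q k) 1 2" for k
  have ik: "((\<lambda>k::real. G * inverse k) \<longlongrightarrow> G * 0) at_top"
    by (rule tendsto_mult[OF tendsto_const tendsto_inverse_0_at_top[OF filterlim_ident]])
  have bd: "eventually (\<lambda>k. \<bar>r k - 1\<bar> \<le> G * inverse k) at_top"
    using eventually_gt_at_top[of 1]
  proof eventually_elim
    case (elim k)
    have "\<bar>r k - 1\<bar> \<le> (1 + 1/(2*a) + \<eta>/a) / k"
    proof -
      have QK: "Q k \<ge> (k - \<eta>) / (k - 1) * (k + 1) * c" using QQ elim by simp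
      show ?thesis
        unfolding r_def qb_c12[OF elim c] qb_p12[OF elim c] a_def
        by (rule bound1[OF c e elim QK])
    qed
    then show ?case by (simp only: G_def divide_inverse)
  qed
  have lo: "eventually (\<lambda>k. 1 - G * inverse k \<le> r k) at_top"
    using bd by eventually_elim linarith
  have hi: "eventually (\<lambda>k. r k \<le> 1 + G * inverse k) at_top"
    using bd by eventually_elim linarith
  have l1: "((\<lambda>k::real. 1 - G * inverse k) \<longlongrightarrow> 1) at_top"
    using tendsto_diff[OF tendsto_const[of "1::real"] ik] by simp
  have l2: "((\<lambda>k::real. 1 + G * inverse k) \<longlongrightarrow> 1) at_top"
    using tendsto_add[OF tendsto_const[of "1::real"] ik] by simp
  have "(r \<longlongrightarrow> 1) at_top" by (rule tendsto_sandwich[OF lo hi l1 l2])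
  then show ?thesis unfolding r_def .
qed

theorem theorem2:
  fixes c \<eta> Q0 :: real and Q :: "real \<Rightarrow> real"
  assumes "c > 0" and "0 < \<eta>" and "\<eta> < 1/2" and "Q0 \<ge> 0"
    and "\<forall>k>1. Q k \<ge> 0 \<and> Q k \<ge> (k^2 - \<eta>) / (k - 1) * c
                 \<and> Q k \<ge> (k - \<eta>) / (k - 1) * (k + 1) * c"
  shows "((\<lambda>k. q_bar classical_w c k \<eta> (Q k) 1 2 / q_bar (proposed_w c k) c k \<eta> (Q k) 1 2)
            \<longlongrightarrow> 1) at_top
       \<and> ((\<lambda>k. q_bar classical_w c k \<eta> Q0 2 1 / (k * q_bar (proposed_w c k) c k \<eta> Q0 2 1))
            \<longlongrightarrow> 1) at_top"
proof
  show "((\<lambda>k. q_bar classical_w c k \<eta> (Q k) 1 2 / q_bar (proposed_w c k) c k \<eta> (Q k) 1 2)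
            \<longlongrightarrow> 1) at_top"
    by (rule part1) (use assms in auto)
  show "((\<lambda>k. q_bar classical_w c k \<eta> Q0 2 1 / (k * q_bar (proposed_w c k) c k \<eta> Q0 2 1))
            \<longlongrightarrow> 1) at_top"
    by (rule part2) (use assms in auto)
qed

end
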